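(* Let $A$ be an $n\times n$ ASM and let $p=\sigma_-(A)$. Then there is a sequence of $n\times n$ ASMs $A^{(p)},A^{(p-1)},\ldots,A^{(0)}$ such that (i) $A^{(p)}=A$; (ii) $A^{(0)}$ is a permutation matrix; (iii) $\sigma_-(A^{(s)})=s$ for $s=0,1,\ldots,p$; and (iv) $h(A^{(p)})\preceq^* h(A^{(p-1)})\preceq^*\cdots\preceq^* h(A^{(0)})$.
   Context: An $n\times n$ alternating sign matrix (ASM) is an $n\times n$ matrix with entries in $\{0,1,-1\}$ such that in every row and column the nonzeros alternate in sign, beginning and ending with $+1$. $\sigma_-(B)$ denotes the number of entries equal to $-1$ in $B$. For an $n\times n$ matrix $B$, $h(B)=B^Tz_n$ where $z_n=(n,n-1,\ldots,1)^T$. For vectors $x,y\in\mathbb R^n$ (not necessarily sorted), $x\preceq^* y$ means $\sum_{j=1}^p x_j\le\sum_{j=1}^p y_j$ for all $p\le n$, with equality for $p=n$. *)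

theory Defs
  imports "HOL-Combinatorics.Permutations"
begin

text \<open>An n x n matrix is represented as a function nat => nat => int; only
entries with row and column index below n are meaningful (indices 0..n-1).\<close>

definition alt_sign_list :: "int list \<Rightarrow> bool" where
  "alt_sign_list xs \<longleftrightarrow>
     (let L = filter (\<lambda>x. x \<noteq> 0) xs in
        L \<noteq> [] \<and> hd L = 1 \<and> last L = 1 \<and>
        (\<forall>k. Suc k < length L \<longrightarrow> L ! Suc k = - (L ! k)))"

definition is_asm :: "nat \<Rightarrow> (nat \<Rightarrow> nat \<Rightarrow> int) \<Rightarrow> bool" where
  "is_asm n A \<longleftrightarrow>
     (\<forall>i<n. \<forall>j<n. A i j \<in> {0, 1, -1}) \<and>
     (\<forall>i<n. alt_sign_list (map (\<lambda>j. A i j) [0..<n])) \<and>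
     (\<forall>j<n. alt_sign_list (map (\<lambda>i. A i j) [0..<n]))"

definition sigma_minus :: "nat \<Rightarrow> (nat \<Rightarrow> nat \<Rightarrow> int) \<Rightarrow> nat" where
  "sigma_minus n A = card {(i, j). i < n \<and> j < n \<and> A i j = -1}"

definition is_perm_matrix :: "nat \<Rightarrow> (nat \<Rightarrow> nat \<Rightarrow> int) \<Rightarrow> bool" where
  "is_perm_matrix n A \<longleftrightarrow>
     (\<exists>\<sigma>. \<sigma> permutes {..<n} \<and> (\<forall>i<n. \<forall>j<n. A i j = (if \<sigma> i = j then 1 else 0)))"

text \<open>h(B) = B^T z_n with z_n = (n, n-1, ..., 1): with 0-based indices,
component j is sum over i<n of B i j * (n - i).\<close>
definition hvec :: "nat \<Rightarrow> (nat \<Rightarrow> nat \<Rightarrow> int) \<Rightarrow> nat \<Rightarrow> int" where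
  "hvec n B j = (\<Sum>i<n. B i j * int (n - i))"

text \<open>x \<preceq>* y for vectors of length n (0-based, unsorted): partial sums of
the first p entries of x are at most those of y, equality for p = n.\<close>
definition weak_maj :: "nat \<Rightarrow> (nat \<Rightarrow> int) \<Rightarrow> (nat \<Rightarrow> int) \<Rightarrow> bool" where
  "weak_maj n x y \<longleftrightarrow>
     (\<forall>p\<le>n. (\<Sum>j<p. x j) \<le> (\<Sum>j<p. y j)) \<and> (\<Sum>j<n. x j) = (\<Sum>j<n. y j)"

end

theory Submission
  imports Defs
begin


definition altp :: "int list \<Rightarrow> bool" where
  "altp L \<longleftrightarrow> (\<forall>k. Suc k < length L \<longrightarrow> L ! Suc k = - (L ! k))"

lemma altp_Nil[simp]: "altp []" by (simp add: altp_def)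

lemma altp_Cons[simp]: "altp (a#L) \<longleftrightarrow> (L \<noteq> [] \<longrightarrow> hd L = -a) \<and> altp L"
proof
  assume h: "altp (a#L)"
  show "(L \<noteq> [] \<longrightarrow> hd L = -a) \<and> altp L"
  proof (intro conjI impI)
    assume "L \<noteq> []" thus "hd L = -a" using h[unfolded altp_def, rule_format, of 0]
      by (simp add: hd_conv_nth)
  next
    show "altp L" unfolding altp_def
    proof (intro allI impI)
      fix k assume "Suc k < length L"
      thus "L ! Suc k = - (L ! k)" using h[unfolded altp_def, rule_format, of "Suc k"] by simp
    qed
  qed
next
  assume h: "(L \<noteq> [] \<longrightarrow> hd L = -a) \<and> altp L"
  show "altp (a#L)" unfolding altp_def
  proof (intro allI impI)
    fix k assume k: "Suc k < length (a#L)"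
    show "(a#L) ! Suc k = - ((a#L) ! k)"
    proof (cases k)
      case 0 thus ?thesis using h k by (auto simp: hd_conv_nth)
    next
      case (Suc m) thus ?thesis using h k by (auto simp: altp_def)
    qed
  qed
qed

definition P0 :: "int list \<Rightarrow> bool" where
  "P0 L \<longleftrightarrow> L \<noteq> [] \<and> hd L = 1 \<and> last L = 1 \<and> altp L"
definition P1 :: "int list \<Rightarrow> bool" where
  "P1 L \<longleftrightarrow> L = [] \<or> (hd L = -1 \<and> last L = 1 \<and> altp L)"

definition psok :: "int \<Rightarrow> int list \<Rightarrow> bool" where
  "psok s xs \<longleftrightarrow> (\<forall>k\<le>length xs. s + sum_list (take k xs) \<in> {0,1}) \<and> s + sum_list xs = 1"

lemma psok_Nil: "psok s [] \<longleftrightarrow> s = 1" by (auto simp: psok_def)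

lemma psok_Cons: "psok s (x#xs) \<longleftrightarrow> s \<in> {0,1} \<and> psok (s+x) xs"
proof -
  have "(\<forall>k\<le>Suc (length xs). P k) \<longleftrightarrow> P 0 \<and> (\<forall>m\<le>length xs. P (Suc m))" for P
    apply auto apply (case_tac k) apply auto done
  thus ?thesis unfolding psok_def by (simp add: add.assoc)
qed

lemma psok_bad: "s \<notin> {0,1} \<Longrightarrow> \<not> psok s xs"
  unfolding psok_def by (metis le0 add.right_neutral sum_list.Nil take_0)

lemma psok_P: "set xs \<subseteq> {0,1,-1} \<Longrightarrow>
  (psok 0 xs \<longleftrightarrow> P0 (filter (\<lambda>x. x \<noteq> 0) xs)) \<and> (psok 1 xs \<longleftrightarrow> P1 (filter (\<lambda>x. x \<noteq> 0) xs))"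
proof (induction xs)
  case Nil thus ?case by (simp add: psok_Nil P0_def P1_def)
next
  case (Cons x xs)
  hence IH: "psok 0 xs \<longleftrightarrow> P0 (filter (\<lambda>x. x \<noteq> 0) xs)" "psok 1 xs \<longleftrightarrow> P1 (filter (\<lambda>x. x \<noteq> 0) xs)"
    and x: "x \<in> {0,1,-1}" by auto
  show ?case
  proof -
    consider "x = 0" | "x = 1" | "x = -1" using x by auto
    thus ?thesis
    proof cases
      case 1 thus ?thesis using IH by (simp add: psok_Cons)
    next
      case 2 thus ?thesis using IH psok_bad[of 2 xs]
        by (auto simp: psok_Cons P0_def P1_def)
    next
      case 3 thus ?thesis using IH psok_bad[of "-1" xs]
        by (auto simp: psok_Cons P0_def P1_def)
    qed
  qed
qed

lemma alt_psok: "set xs \<subseteq> {0,1,-1} \<Longrightarrow> alt_sign_list xs \<longleftrightarrow> psok 0 xs"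
  using psok_P[of xs] by (simp add: alt_sign_list_def P0_def altp_def Let_def)

lemma alt_map: assumes "\<forall>j<n. f j \<in> {0,1,-1}"
  shows "alt_sign_list (map f [0..<n]) \<longleftrightarrow> (\<forall>k\<le>n. sum f {..<k} \<in> {0,1}) \<and> sum f {..<n} = 1"
proof -
  have s: "set (map f [0..<n]) \<subseteq> {0,1,-1}" using assms by auto
  have t: "sum_list (take k (map f [0..<n])) = sum f {..<k}" if "k \<le> n" for k
    using that by (simp add: take_map) (metis atLeast_upt sum_set_upt_conv_sum_list_nat)
  have u: "sum_list (map f [0..<n]) = sum f {..<n}"
    by (metis atLeast_upt sum_set_upt_conv_sum_list_nat)
  show ?thesis unfolding alt_psok[OF s] psok_def using t u by auto
qed



definition asm2 :: "nat \<Rightarrow> (nat \<Rightarrow> nat \<Rightarrow> int) \<Rightarrow> bool" where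
  "asm2 n B \<longleftrightarrow> (\<forall>i<n. \<forall>j<n. B i j \<in> {0,1,-1}) \<and>
     (\<forall>i<n. (\<forall>k\<le>n. (\<Sum>j<k. B i j) \<in> {0,1}) \<and> (\<Sum>j<n. B i j) = 1) \<and>
     (\<forall>j<n. (\<forall>k\<le>n. (\<Sum>i<k. B i j) \<in> {0,1}) \<and> (\<Sum>i<n. B i j) = 1)"

lemma is_asm_iff: "is_asm n B \<longleftrightarrow> asm2 n B"
proof
  assume h: "is_asm n B"
  hence e: "\<forall>i<n. \<forall>j<n. B i j \<in> {0,1,-1}" by (simp add: is_asm_def)
  have r: "\<forall>i<n. (\<forall>k\<le>n. (\<Sum>j<k. B i j) \<in> {0,1}) \<and> (\<Sum>j<n. B i j) = 1"
  proof (intro allI impI)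
    fix i assume "i < n"
    hence "alt_sign_list (map (\<lambda>j. B i j) [0..<n])" using h by (simp add: is_asm_def)
    thus "(\<forall>k\<le>n. (\<Sum>j<k. B i j) \<in> {0,1}) \<and> (\<Sum>j<n. B i j) = 1"
      using alt_map[of n "\<lambda>j. B i j"] e \<open>i<n\<close> by auto
  qed
  have c: "\<forall>j<n. (\<forall>k\<le>n. (\<Sum>i<k. B i j) \<in> {0,1}) \<and> (\<Sum>i<n. B i j) = 1"
  proof (intro allI impI)
    fix j assume "j < n"
    hence "alt_sign_list (map (\<lambda>i. B i j) [0..<n])" using h by (simp add: is_asm_def)
    thus "(\<forall>k\<le>n. (\<Sum>i<k. B i j) \<in> {0,1}) \<and> (\<Sum>i<n. B i j) = 1"
      using alt_map[of n "\<lambda>i. B i j"] e \<open>j<n\<close> by auto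
  qed
  show "asm2 n B" unfolding asm2_def using e r c by blast
next
  assume h: "asm2 n B"
  hence e: "\<forall>i<n. \<forall>j<n. B i j \<in> {0,1,-1}" by (simp add: asm2_def)
  show "is_asm n B" unfolding is_asm_def
  proof (intro conjI allI impI)
    fix i assume "i < n"
    thus "alt_sign_list (map (\<lambda>j. B i j) [0..<n])"
      using alt_map[of n "\<lambda>j. B i j"] e h by (auto simp: asm2_def)
  next
    fix j assume "j < n"
    thus "alt_sign_list (map (\<lambda>i. B i j) [0..<n])"
      using alt_map[of n "\<lambda>i. B i j"] e h by (auto simp: asm2_def)
  qed (use e in auto)
qed

lemma entry_from_ps: "\<forall>k\<le>n. (sum (f::nat\<Rightarrow>int) {..<k}::int) \<in> {0,1} \<Longrightarrow> j < n \<Longrightarrow> f j \<in> {0,1,-1}"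
proof -
  assume h: "\<forall>k\<le>n. (sum f {..<k}::int) \<in> {0,1}" "j < n"
  have "sum f {..<Suc j} = sum f {..<j} + f j" by simp
  moreover have "Suc j \<le> n" "j \<le> n" using h by auto
  hence "sum f {..<Suc j} \<in> {0,1}" "sum f {..<j} \<in> {0,1}" using h(1) by blast+
  ultimately have "f j = -1 \<or> f j = 0 \<or> f j = 1" by auto
  thus ?thesis by auto
qed

lemma sum_le_pair: "finite A \<Longrightarrow> \<forall>x\<in>A. 0 \<le> (f x::int) \<Longrightarrow> a \<in> A \<Longrightarrow> b \<in> A \<Longrightarrow> a \<noteq> b
  \<Longrightarrow> f a + f b \<le> sum f A"
proof -
  assume h: "finite A" "\<forall>x\<in>A. 0 \<le> (f x::int)" "a \<in> A" "b \<in> A" "a \<noteq> b"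
  have "sum f {a,b} \<le> sum f A" by (rule sum_mono2) (use h in auto)
  thus ?thesis using h by simp
qed

lemma sum_single: "finite A \<Longrightarrow> \<forall>j\<in>A. j \<noteq> a \<longrightarrow> f j = 0 \<Longrightarrow> sum f A = (if a \<in> A then f a else (0::int))"
proof -
  assume h: "finite A" "\<forall>j\<in>A. j \<noteq> a \<longrightarrow> f j = 0"
  have "sum f A = sum (\<lambda>j. if j = a then f a else 0) A" by (rule sum.cong) (use h in auto)
  thus ?thesis using h by simp
qed

lemma sum_nz: "sum f A \<noteq> (0::int) \<Longrightarrow> \<exists>x\<in>A. f x \<noteq> 0"
  by (meson sum.neutral)

definition dd :: "nat \<Rightarrow> nat \<Rightarrow> int" where "dd a b = (if a = b then 1 else 0)"

lemma sum_dd_diff: "(\<Sum>j<k. dd j a - dd j b) = (if a < k then 1 else 0) - (if b < k then 1 else 0)"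
  by (simp add: sum_subtractf dd_def)



lemma sum_dd_one: "a < n \<Longrightarrow> (\<Sum>i<n. dd i a * w i) = (w a::int)"
proof -
  assume "a < n"
  have "(\<Sum>i<n. dd i a * w i) = (\<Sum>i<n. if i = a then w a else 0)" by (rule sum.cong) (auto simp: dd_def)
  thus ?thesis using \<open>a<n\<close> by simp
qed

lemma sum_dd_w: "a < n \<Longrightarrow> b < n \<Longrightarrow> (\<Sum>i<n. (dd i a - dd i b) * w i) = w a - (w b::int)"
  by (simp add: left_diff_distrib sum_subtractf sum_dd_one)

lemma modify:
  fixes B :: "nat\<Rightarrow>nat\<Rightarrow>int"
  assumes A: "asm2 n B" and rn: "r<n" and cn: "c<n" and m1: "B r c = -1"
  and minr: "\<forall>i<r. \<forall>j<n. B i j \<noteq> -1" and minc: "\<forall>j<c. B r j \<noteq> -1"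
  and r1: "r1 < r" and c1: "c1 < c" and b1: "B r1 c = 1" and b2: "B r c1 = 1"
  defines "M \<equiv> \<lambda>i j. B i j + (dd i r1 - dd i r) * (dd j c1 - dd j c)"
  shows "asm2 n M \<and> sigma_minus n M = sigma_minus n B - 1 \<and> weak_maj n (hvec n B) (hvec n M)"
proof -
  have ent: "\<forall>i<n. \<forall>j<n. B i j \<in> {0,1,-1}"
   and rowps: "\<forall>i<n. \<forall>k\<le>n. (\<Sum>j<k. B i j) \<in> {0,1}"
   and rowt: "\<forall>i<n. (\<Sum>j<n. B i j) = 1"
   and colps: "\<forall>j<n. \<forall>k\<le>n. (\<Sum>i<k. B i j) \<in> {0,1}"
   and colt: "\<forall>j<n. (\<Sum>i<n. B i j) = 1" using A by (auto simp: asm2_def)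
  have r1n: "r1 < n" and c1n: "c1 < n" using r1 c1 rn cn by auto
  have nn: "0 \<le> B i j" if "i < r" "j < n" for i j
  proof -
    have "i < n" using that rn by simp
    hence "B i j \<in> {0,1,-1}" "B i j \<noteq> -1" using ent minr that by auto
    thus ?thesis by auto
  qed
  have nnr: "0 \<le> B r j" if "j < c" for j
  proof -
    have "j < n" using that cn by simp
    hence "B r j \<in> {0,1,-1}" "B r j \<noteq> -1" using ent minc that rn by auto
    thus ?thesis by auto
  qed
  have Rc: "(\<Sum>j<c. B r j) = 1"
  proof -
    have "(\<Sum>j<Suc c. B r j) = (\<Sum>j<c. B r j) + B r c" by simp
    moreover have "(\<Sum>j<Suc c. B r j) \<in> {0,1}" "(\<Sum>j<c. B r j) \<in> {0,1}"
      using rowps[rule_format, OF rn, of "Suc c"] rowps[rule_format, OF rn, of c] cn by (simp_all del: sum.lessThan_Suc)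
    ultimately show ?thesis using m1 by auto
  qed
  have Cc: "(\<Sum>i<r. B i c) = 1"
  proof -
    have "(\<Sum>i<Suc r. B i c) = (\<Sum>i<r. B i c) + B r c" by simp
    moreover have "(\<Sum>i<Suc r. B i c) \<in> {0,1}" "(\<Sum>i<r. B i c) \<in> {0,1}"
      using colps[rule_format, OF cn, of "Suc r"] colps[rule_format, OF cn, of r] rn by (simp_all del: sum.lessThan_Suc)
    ultimately show ?thesis using m1 by auto
  qed
  have er: "B r j = 0" if "j < c" "j \<noteq> c1" for j
  proof -
    have "B r c1 + B r j \<le> (\<Sum>j<c. B r j)"
      by (rule sum_le_pair) (use that c1 nnr in auto)
    thus ?thesis using Rc b2 nnr[OF that(1)] by auto
  qed
  have ec: "B i c = 0" if "i < r" "i \<noteq> r1" for i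
  proof -
    have "B r1 c + B i c \<le> (\<Sum>i<r. B i c)"
      by (rule sum_le_pair) (use that r1 nn cn in auto)
    thus ?thesis using Cc b1 nn[OF that(1) cn] by auto
  qed
  have z1: "B i c1 = 0" if "i < r" for i
  proof -
    have "(\<Sum>i<Suc r. B i c1) = (\<Sum>i<r. B i c1) + B r c1" by simp
    moreover have "(\<Sum>i<Suc r. B i c1) \<in> {0,1}"
      using colps[rule_format, OF c1n, of "Suc r"] rn by (simp del: sum.lessThan_Suc)
    ultimately have "(\<Sum>i<r. B i c1) \<le> 0" using b2 by auto
    moreover have "B i c1 \<le> (\<Sum>i<r. B i c1)"
      by (rule member_le_sum) (use that nn c1n in auto)
    ultimately show ?thesis using nn[OF that c1n] by auto
  qed
  have z2: "B r1 j = 0" if "j < n" "j \<noteq> c" for j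
  proof -
    have "B r1 c + B r1 j \<le> (\<Sum>j<n. B r1 j)"
      by (rule sum_le_pair) (use that r1 nn cn in auto)
    thus ?thesis using rowt r1n b1 nn[OF r1 that(1)] by auto
  qed
  have rowM: "(\<Sum>j<k. M i j) = (\<Sum>j<k. B i j) + (dd i r1 - dd i r) * ((if c1<k then 1 else 0) - (if c<k then 1 else 0))" for i k
    by (simp add: M_def sum.distrib sum_distrib_left[symmetric] sum_dd_diff)
  have colM: "(\<Sum>i<k. M i j) = (\<Sum>i<k. B i j) + ((if r1<k then 1 else 0) - (if r<k then 1 else 0)) * (dd j c1 - dd j c)" for j k
    by (simp add: M_def sum.distrib sum_distrib_right[symmetric] sum_dd_diff)
  have rowpsM: "(\<Sum>j<k. M i j) \<in> {0,1}" if "i < n" "k \<le> n" for i k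
  proof -
    consider "i = r1" | "i = r" | "i \<noteq> r1" "i \<noteq> r" by blast
    thus ?thesis
    proof cases
      case 1
      have "(\<Sum>j<k. B r1 j) = (if c \<in> {..<k} then B r1 c else 0)"
        by (rule sum_single) (use z2 that in auto)
      thus ?thesis using 1 rowM[of i k] r1 b1 by (simp add: dd_def)
    next
      case 2
      show ?thesis
      proof (cases "k \<le> c")
        case True
        have "(\<Sum>j<k. B r j) = (if c1 \<in> {..<k} then B r c1 else 0)"
          by (rule sum_single) (use er True in auto)
        thus ?thesis using 2 True rowM[of i k] r1 b2 by (simp add: dd_def)
      next
        case False
        thus ?thesis using 2 rowM[of i k] r1 c1 rowps that by (simp add: dd_def)
      qed
    next
      case 3 thus ?thesis using rowM[of i k] rowps that by (simp add: dd_def)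
    qed
  qed
  have rowtM: "(\<Sum>j<n. M i j) = 1" if "i < n" for i
    using rowM[of i n] rowt that cn c1n by simp
  have colpsM: "(\<Sum>i<k. M i j) \<in> {0,1}" if "j < n" "k \<le> n" for j k
  proof -
    consider "j = c1" | "j = c" | "j \<noteq> c1" "j \<noteq> c" by blast
    thus ?thesis
    proof cases
      case 1
      show ?thesis
      proof (cases "k \<le> r")
        case True
        have "(\<Sum>i<k. B i c1) = 0"
          by (rule sum.neutral) (use z1 True in auto)
        thus ?thesis using 1 True colM[of j k] c1 by (simp add: dd_def)
      next
        case False
        thus ?thesis using 1 colM[of j k] r1 c1 colps that by (simp add: dd_def)
      qed
    next
      case 2
      show ?thesis
      proof (cases "k \<le> r")
        case True
        have "(\<Sum>i<k. B i c) = (if r1 \<in> {..<k} then B r1 c else 0)"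
          by (rule sum_single) (use ec True in auto)
        thus ?thesis using 2 True colM[of j k] c1 b1 by (simp add: dd_def)
      next
        case False
        thus ?thesis using 2 colM[of j k] r1 c1 colps that by (simp add: dd_def)
      qed
    next
      case 3 thus ?thesis using colM[of j k] colps that by (simp add: dd_def)
    qed
  qed
  have coltM: "(\<Sum>i<n. M i j) = 1" if "j < n" for j
    using colM[of j n] colt that rn r1n by simp
  have entM: "M i j \<in> {0,1,-1}" if "i < n" "j < n" for i j
    using entry_from_ps[of n "M i" j] rowpsM that by auto
  have asmM: "asm2 n M" unfolding asm2_def using entM rowpsM rowtM colpsM coltM by auto
  have pt: "M i j = (if (i=r1 \<or> i=r) \<and> (j=c1 \<or> j=c) then (if i=r1 \<and> j=c1 then 1 else 0) else B i j)" for i j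
    using z1[OF r1] b1 b2 m1 r1 c1 by (auto simp: M_def dd_def)
  have seteq: "{(i,j). i<n \<and> j<n \<and> M i j = -1} = {(i,j). i<n \<and> j<n \<and> B i j = -1} - {(r,c)}"
    using pt z1[OF r1] b1 b2 m1 r1 c1 by auto
  have fin: "finite {(i,j). i<n \<and> j<n \<and> B i j = -1}"
    by (rule finite_subset[of _ "{..<n} \<times> {..<n}"]) auto
  have sig: "sigma_minus n M = sigma_minus n B - 1"
    unfolding sigma_minus_def seteq using fin rn cn m1 by (simp add: card_Diff_singleton)
  have hM: "hvec n M j = hvec n B j + (dd j c1 - dd j c) * (int r - int r1)" for j
  proof -
    have "hvec n M j = (\<Sum>i<n. B i j * int (n-i) + (dd j c1 - dd j c) * ((dd i r1 - dd i r) * int (n-i)))"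
      unfolding hvec_def M_def by (rule sum.cong) (simp_all add: algebra_simps)
    also have "\<dots> = hvec n B j + (dd j c1 - dd j c) * (\<Sum>i<n. (dd i r1 - dd i r) * int (n - i))"
      by (simp add: hvec_def sum.distrib sum_distrib_left[symmetric])
    also have "(\<Sum>i<n. (dd i r1 - dd i r) * int (n - i)) = int (n - r1) - int (n - r)"
      by (rule sum_dd_w[OF r1n rn])
    also have "int (n - r1) - int (n - r) = int r - int r1" using r1 rn by auto
    finally show ?thesis .
  qed
  have hs: "(\<Sum>j<p. hvec n M j) = (\<Sum>j<p. hvec n B j) + ((if c1<p then 1 else 0) - (if c<p then 1 else 0)) * (int r - int r1)" for p
    by (simp add: hM sum.distrib sum_distrib_right[symmetric] sum_dd_diff)
  have wm: "weak_maj n (hvec n B) (hvec n M)"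
    unfolding weak_maj_def
  proof (intro conjI allI impI)
    fix p assume "p \<le> n"
    have "0 \<le> ((if c1<p then 1 else 0) - (if c<p then 1 else 0)) * (int r - int r1)"
      using c1 r1 by auto
    thus "(\<Sum>j<p. hvec n B j) \<le> (\<Sum>j<p. hvec n M j)" using hs[of p] by linarith
  next
    show "(\<Sum>j<n. hvec n B j) = (\<Sum>j<n. hvec n M j)" using hs[of n] cn c1n by simp
  qed
  show ?thesis using asmM sig wm by blast
qed



lemma exist_c1r1:
  fixes B :: "nat\<Rightarrow>nat\<Rightarrow>int"
  assumes A: "asm2 n B" and rn: "r<n" and cn: "c<n" and m1: "B r c = -1"
  and minr: "\<forall>i<r. \<forall>j<n. B i j \<noteq> -1" and minc: "\<forall>j<c. B r j \<noteq> -1"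
  shows "(\<exists>j. j < c \<and> B r j = 1) \<and> (\<exists>i. i < r \<and> B i c = 1)"
proof -
  have ent: "\<forall>i<n. \<forall>j<n. B i j \<in> {0,1,-1}"
   and rowps: "\<forall>i<n. \<forall>k\<le>n. (\<Sum>j<k. B i j) \<in> {0,1}"
   and colps: "\<forall>j<n. \<forall>k\<le>n. (\<Sum>i<k. B i j) \<in> {0,1}" using A by (auto simp: asm2_def)
  have Rc: "(\<Sum>j<c. B r j) = 1"
  proof -
    have "(\<Sum>j<Suc c. B r j) = (\<Sum>j<c. B r j) + B r c" by simp
    moreover have "(\<Sum>j<Suc c. B r j) \<in> {0,1}" "(\<Sum>j<c. B r j) \<in> {0,1}"
      using rowps[rule_format, OF rn, of "Suc c"] rowps[rule_format, OF rn, of c] cn by (simp_all del: sum.lessThan_Suc)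
    ultimately show ?thesis using m1 by auto
  qed
  have Cc: "(\<Sum>i<r. B i c) = 1"
  proof -
    have "(\<Sum>i<Suc r. B i c) = (\<Sum>i<r. B i c) + B r c" by simp
    moreover have "(\<Sum>i<Suc r. B i c) \<in> {0,1}" "(\<Sum>i<r. B i c) \<in> {0,1}"
      using colps[rule_format, OF cn, of "Suc r"] colps[rule_format, OF cn, of r] rn by (simp_all del: sum.lessThan_Suc)
    ultimately show ?thesis using m1 by auto
  qed
  obtain j where j: "j < c" "B r j \<noteq> 0" using sum_nz[of "\<lambda>j. B r j" "{..<c}"] Rc by auto
  have "j < n" using j cn by simp
  hence "B r j = 1" using ent minc j rn by auto
  moreover
  obtain i where i: "i < r" "B i c \<noteq> 0" using sum_nz[of "\<lambda>i. B i c" "{..<r}"] Cc by auto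
  have "i < n" using i rn by simp
  hence "B i c = 1" using ent minr i cn by auto
  ultimately show ?thesis using i j by blast
qed

definition stepm :: "nat \<Rightarrow> (nat\<Rightarrow>nat\<Rightarrow>int) \<Rightarrow> nat\<Rightarrow>nat\<Rightarrow>int" where
"stepm n B = (let r = (LEAST i. i<n \<and> (\<exists>j<n. B i j = -1));
   c = (LEAST j. j<n \<and> B r j = -1);
   c1 = (SOME j. j<c \<and> B r j = 1);
   r1 = (SOME i. i<r \<and> B i c = 1)
 in (\<lambda>i j. B i j + (dd i r1 - dd i r) * (dd j c1 - dd j c)))"

lemma stepm_ok:
  assumes A: "asm2 n B" and s: "sigma_minus n B > 0"
  shows "asm2 n (stepm n B) \<and> sigma_minus n (stepm n B) = sigma_minus n B - 1
     \<and> weak_maj n (hvec n B) (hvec n (stepm n B))"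
proof -
  from s obtain i0 j0 where ij: "i0 < n" "j0 < n" "B i0 j0 = -1"
    unfolding sigma_minus_def by (metis (mono_tags, lifting) card.empty case_prodE empty_iff less_irrefl mem_Collect_eq subsetI subset_antisym)
  define r where "r = (LEAST i. i<n \<and> (\<exists>j<n. B i j = -1))"
  have r: "r < n \<and> (\<exists>j<n. B r j = -1)" unfolding r_def by (rule LeastI_ex) (use ij in blast)
  have minr: "\<forall>i<r. \<forall>j<n. B i j \<noteq> -1"
  proof (intro allI impI)
    fix i j assume "i < r" "j < n"
    hence "\<not> (i<n \<and> (\<exists>j<n. B i j = -1))" using not_less_Least[of i] unfolding r_def by blast
    thus "B i j \<noteq> -1" using \<open>i<r\<close> r \<open>j<n\<close> by auto
  qed
  define c where "c = (LEAST j. j<n \<and> B r j = -1)"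
  have c: "c < n \<and> B r c = -1" unfolding c_def by (rule LeastI_ex) (use r in blast)
  have minc: "\<forall>j<c. B r j \<noteq> -1"
  proof (intro allI impI)
    fix j assume "j < c"
    hence "\<not> (j<n \<and> B r j = -1)" using not_less_Least[of j] unfolding c_def by blast
    thus "B r j \<noteq> -1" using \<open>j<c\<close> c by auto
  qed
  have ex: "(\<exists>j. j < c \<and> B r j = 1) \<and> (\<exists>i. i < r \<and> B i c = 1)"
    using exist_c1r1[OF A] r c minr minc by blast
  define c1 where "c1 = (SOME j. j<c \<and> B r j = 1)"
  define r1 where "r1 = (SOME i. i<r \<and> B i c = 1)"
  have c1: "c1 < c \<and> B r c1 = 1" unfolding c1_def by (rule someI_ex) (use ex in blast)
  have r1: "r1 < r \<and> B r1 c = 1" unfolding r1_def by (rule someI_ex) (use ex in blast)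
  have eq: "stepm n B = (\<lambda>i j. B i j + (dd i r1 - dd i r) * (dd j c1 - dd j c))"
    unfolding stepm_def Let_def r_def[symmetric] c_def[symmetric] c1_def[symmetric] r1_def[symmetric] ..
  show ?thesis unfolding eq
    by (rule modify[OF A]) (use r c minr minc c1 r1 in auto)
qed

lemma perm_of_zero:
  assumes A: "asm2 n B" and s: "sigma_minus n B = 0"
  shows "is_perm_matrix n B"
proof -
  have fin: "finite {(i,j). i<n \<and> j<n \<and> B i j = -1}"
    by (rule finite_subset[of _ "{..<n} \<times> {..<n}"]) auto
  hence none: "\<forall>i<n. \<forall>j<n. B i j \<noteq> -1" using s unfolding sigma_minus_def by auto
  have ent: "\<forall>i<n. \<forall>j<n. B i j \<in> {0,1}" using A none by (auto simp: asm2_def)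
  have rowt: "\<forall>i<n. (\<Sum>j<n. B i j) = 1" and colt: "\<forall>j<n. (\<Sum>i<n. B i j) = 1"
    using A by (auto simp: asm2_def)
  have uniq: "\<exists>!j. j < n \<and> B i j = 1" if iN: "i < n" for i
  proof -
    obtain j where j: "j < n" "B i j \<noteq> 0" using sum_nz[of "\<lambda>j. B i j" "{..<n}"] rowt iN by auto
    have j1: "B i j = 1" using ent j iN by auto
    show ?thesis
    proof (rule ex1I[of _ j])
      show "j < n \<and> B i j = 1" using j j1 by simp
    next
      fix k assume k: "k < n \<and> B i k = 1"
      show "k = j"
      proof (rule ccontr)
        assume "k \<noteq> j"
        have "B i j + B i k \<le> (\<Sum>j<n. B i j)"
          by (rule sum_le_pair) (use ent iN j k \<open>k\<noteq>j\<close> in fastforce)+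
        thus False using rowt iN j1 k by auto
      qed
    qed
  qed
  define \<sigma> where "\<sigma> i = (if i < n then (THE j. j < n \<and> B i j = 1) else i)" for i
  have sig: "\<sigma> i < n \<and> B i (\<sigma> i) = 1" if "i < n" for i
    unfolding \<sigma>_def using theI'[OF uniq[OF that]] that by simp
  have sigeq: "\<sigma> i = j \<longleftrightarrow> B i j = 1" if "i < n" "j < n" for i j
    using sig[OF that(1)] uniq[OF that(1)] that by blast
  have inj: "inj_on \<sigma> {..<n}"
  proof (rule inj_onI)
    fix a b assume a: "a \<in> {..<n}" and b: "b \<in> {..<n}" and e: "\<sigma> a = \<sigma> b"
    show "a = b"
    proof (rule ccontr)
      assume "a \<noteq> b"
      let ?j = "\<sigma> a"
      have jn: "?j < n" and ba: "B a ?j = 1" and bb: "B b ?j = 1" using sig[of a] sig[of b] a b e by auto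
      have "B a ?j + B b ?j \<le> (\<Sum>i<n. B i ?j)"
        by (rule sum_le_pair) (use ent jn a b \<open>a\<noteq>b\<close> in fastforce)+
      thus False using colt jn ba bb by auto
    qed
  qed
  have perm: "\<sigma> permutes {..<n}"
    by (rule inj_imp_permutes[OF inj]) (use sig in auto, auto simp: \<sigma>_def)
  show ?thesis unfolding is_perm_matrix_def
  proof (intro exI conjI allI impI)
    show "\<sigma> permutes {..<n}" by (rule perm)
  next
    fix i j assume "i < n" "j < n"
    thus "B i j = (if \<sigma> i = j then 1 else 0)" using sigeq ent by auto
  qed
qed



lemma iter:
  assumes "asm2 n A" shows "k \<le> sigma_minus n A \<Longrightarrow> asm2 n ((stepm n ^^ k) A) \<and> sigma_minus n ((stepm n ^^ k) A) = sigma_minus n A - k"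
proof (induction k)
  case 0 thus ?case using assms by simp
next
  case (Suc k)
  hence IH: "asm2 n ((stepm n ^^ k) A)" "sigma_minus n ((stepm n ^^ k) A) = sigma_minus n A - k" by auto
  have "sigma_minus n ((stepm n ^^ k) A) > 0" using IH Suc.prems by simp
  from stepm_ok[OF IH(1) this] show ?case using IH Suc.prems by simp
qed

theorem mainTheorem9:
  fixes n :: nat and A :: "nat \<Rightarrow> nat \<Rightarrow> int"
  assumes "is_asm n A"
  defines "p \<equiv> sigma_minus n A"
  shows "\<exists>S :: nat \<Rightarrow> nat \<Rightarrow> nat \<Rightarrow> int.
           (\<forall>s\<le>p. is_asm n (S s)) \<and>
           (\<forall>i<n. \<forall>j<n. S p i j = A i j) \<and>
           is_perm_matrix n (S 0) \<and>
           (\<forall>s\<le>p. sigma_minus n (S s) = s) \<and>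
           (\<forall>s<p. weak_maj n (hvec n (S (Suc s))) (hvec n (S s)))"
proof -
  have A2: "asm2 n A" using assms(1) is_asm_iff by blast
  define S where "S s = (stepm n ^^ (p - s)) A" for s
  have it: "asm2 n (S s) \<and> sigma_minus n (S s) = s" if "s \<le> p" for s
    using iter[OF A2, of "p - s"] that unfolding S_def p_def by auto
  have wm: "weak_maj n (hvec n (S (Suc s))) (hvec n (S s))" if "s < p" for s
  proof -
    have "p - s = Suc (p - Suc s)" using that by simp
    hence eq: "S s = stepm n (S (Suc s))" unfolding S_def by simp
    have "asm2 n (S (Suc s))" "sigma_minus n (S (Suc s)) > 0" using it[of "Suc s"] that by auto
    from stepm_ok[OF this] show ?thesis unfolding eq by blast
  qed
  show ?thesis
  proof (intro exI[of _ S] conjI allI impI)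
    fix s assume "s \<le> p" thus "is_asm n (S s)" using it is_asm_iff by blast
  next
    fix i j show "S p i j = A i j" by (simp add: S_def)
  next
    show "is_perm_matrix n (S 0)" using it[of 0] perm_of_zero by blast
  next
    fix s assume "s \<le> p" thus "sigma_minus n (S s) = s" using it by blast
  next
    fix s assume "s < p" thus "weak_maj n (hvec n (S (Suc s))) (hvec n (S s))" by (rule wm)
  qed
qed


end
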